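(* (a) Let $n\ge3$ be odd, $a_0,\dots,a_{n-1}\in\mathbb{R}$ with $a_0<0$, $a_k>0$ for $k\ne0$, and $a_0+a_2<0$, and let $\mathcal A(x)=\det(xI-A')$ where $A'$ is the $n\times n$ matrix with $(A')_{j,j+1}=a_{j+1}$, $(A')_{j,j-1}=-a_{j-1}$ (indices mod $n$), other entries zero. Then there exists $x_2^*>\sqrt{-a_1(a_0+a_2)}$ with $\mathcal A(x_2^* )=0$. (b) Let $\alpha\le-1$, $\beta\ge1$ be integers and $a_k\in\mathbb{R}$ for $\alpha\le k\le\max(\beta,2)$ with $a_0<0$, $a_k>0$ for $k\ne0$, and $a_0+a_2<0$; let $\mathcal T_\alpha^\beta(x)=\det(xI-M)$ where $M$ is indexed by $\alpha,\dots,\beta$ with $M_{j,j+1}=a_{j+1}$, $M_{j,j-1}=-a_{j-1}$, other entries zero. Then there exists $x_1^*>\sqrt{-a_1(a_0+a_2)}$ with $\mathcal T_\alpha^\beta(x_1^* )=0$. *)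

theory Defs
  imports Complex_Main "Jordan_Normal_Form.Determinant"
begin

definition cyc_mat :: "nat \<Rightarrow> (nat \<Rightarrow> real) \<Rightarrow> real mat" where
  "cyc_mat n a = mat n n (\<lambda>(j, c).
     if c = (j + 1) mod n then a c
     else if (c + 1) mod n = j then - a c
     else 0)"

text \<open>The tridiagonal matrix M indexed by alpha..beta; matrix position i corresponds
  to index alpha + i.  Entry (j, j+1) = a(j+1), entry (j, j-1) = - a(j-1).\<close>
definition tri_mat :: "int \<Rightarrow> int \<Rightarrow> (int \<Rightarrow> real) \<Rightarrow> real mat" where
  "tri_mat \<alpha> \<beta> a = mat (nat (\<beta> - \<alpha> + 1)) (nat (\<beta> - \<alpha> + 1)) (\<lambda>(i, l).
     let j = \<alpha> + int i; c = \<alpha> + int l in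
     if c = j + 1 then a c
     else if c = j - 1 then - a c
     else 0)"

definition charp :: "real mat \<Rightarrow> real \<Rightarrow> real" where
  "charp B x = det (x \<cdot>\<^sub>m 1\<^sub>m (dim_row B) - B)"

end

theory Submission imports Defs begin


fun contF :: "(nat \<Rightarrow> nat \<Rightarrow> real) \<Rightarrow> nat \<Rightarrow> real" where
  "contF F 0 = 1"
| "contF F (Suc 0) = F 0 0"
| "contF F (Suc (Suc k)) = F (Suc k) (Suc k) * contF F (Suc k) - F (Suc k) k * F k (Suc k) * contF F k"

lemma sum_two_last:
  fixes g :: "nat \<Rightarrow> real"
  assumes "\<And>j. j < m \<Longrightarrow> g j = 0"
  shows "(\<Sum>j<Suc (Suc m). g j) = g m + g (Suc m)"
  using assms by (simp add: lessThan_Suc)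

lemma tri_det:
  fixes F :: "nat \<Rightarrow> nat \<Rightarrow> real"
  shows "(\<And>i j. i < k \<Longrightarrow> j < k \<Longrightarrow> Suc i < j \<or> Suc j < i \<Longrightarrow> F i j = 0)
    \<Longrightarrow> det (mat k k (\<lambda>(i,j). F i j)) = contF F k"
proof (induction k rule: less_induct)
  case (less k)
  show ?case
  proof (cases k)
    case 0 then show ?thesis by simp
  next
    case (Suc k1)
    note k1 = Suc
    show ?thesis
    proof (cases k1)
      case 0
      have "det (mat k k (\<lambda>(i,j). F i j)) = (\<Sum>j<1. mat k k (\<lambda>(i,j). F i j) $$ (0,j) * cofactor (mat k k (\<lambda>(i,j). F i j)) 0 j)"
        by (rule laplace_expansion_row) (auto simp: k1 0)
      also have "\<dots> = F 0 0" by (simp add: k1 0 cofactor_def mat_delete_def)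
      finally show ?thesis by (simp add: k1 0)
    next
      case (Suc m)
      have k: "k = Suc (Suc m)" using k1 Suc by simp
      define A where "A = mat k k (\<lambda>(i,j). F i j)"
      have Ac: "A \<in> carrier_mat k k" by (simp add: A_def)
      have "det A = (\<Sum>j<k. A $$ (Suc m,j) * cofactor A (Suc m) j)"
        by (rule laplace_expansion_row[OF Ac]) (simp add: k)
      also have "\<dots> = A $$ (Suc m, m) * cofactor A (Suc m) m + A $$ (Suc m, Suc m) * cofactor A (Suc m) (Suc m)"
        unfolding k by (rule sum_two_last) (simp add: A_def k less.prems)
      finally have d0: "det A = A $$ (Suc m, m) * cofactor A (Suc m) m + A $$ (Suc m, Suc m) * cofactor A (Suc m) (Suc m)" .
      have d1: "mat_delete A (Suc m) (Suc m) = mat (Suc m) (Suc m) (\<lambda>(i,j). F i j)"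
        by (rule eq_matI) (auto simp: A_def k mat_delete_def)
      have d2: "det (mat (Suc m) (Suc m) (\<lambda>(i,j). F i j)) = contF F (Suc m)"
        by (rule less.IH) (auto simp: k intro: less.prems)
      have d3: "det (mat_delete A (Suc m) m) = F m (Suc m) * contF F m"
      proof -
        define C where "C = mat_delete A (Suc m) m"
        have Cc: "C \<in> carrier_mat (Suc m) (Suc m)" by (simp add: C_def A_def k mat_delete_def)
        have "det C = (\<Sum>i<Suc m. C $$ (i,m) * cofactor C i m)"
          by (rule laplace_expansion_column[OF Cc]) simp
        also have "\<dots> = C $$ (m,m) * cofactor C m m"
          by (simp add: lessThan_Suc C_def A_def k mat_delete_def less.prems)
        finally have e0: "det C = C $$ (m,m) * cofactor C m m" .
        have e1: "mat_delete C m m = mat m m (\<lambda>(i,j). F i j)"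
          by (rule eq_matI) (auto simp: C_def A_def k mat_delete_def)
        have e2: "det (mat m m (\<lambda>(i,j). F i j)) = contF F m"
          by (rule less.IH) (auto simp: k intro: less.prems)
        show ?thesis using e0 unfolding cofactor_def e1 e2 by (simp add: C_def A_def k mat_delete_def)
      qed
      show ?thesis
        using d0 by (simp add: A_def[symmetric] cofactor_def d1 d2 d3) (simp add: A_def k algebra_simps)
    qed
  qed
qed

lemma prod_list_upt_conv: "prod_list (map f [0..<n]) = (\<Prod>i<n. (f i :: real))"
  by (induction n) (auto simp: lessThan_Suc)

lemma sum_three:
  fixes g :: "nat \<Rightarrow> real"
  assumes "\<And>j. 0 < j \<Longrightarrow> j < Suc m \<Longrightarrow> g j = 0"
  shows "(\<Sum>j<Suc (Suc (Suc m)). g j) = g 0 + g (Suc m) + g (Suc (Suc m))"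
proof -
  have "(\<Sum>j<Suc m. g j) = g 0 + (\<Sum>j<m. g (Suc j))" by (rule sum.lessThan_Suc_shift)
  also have "(\<Sum>j<m. g (Suc j)) = 0" by (rule sum.neutral) (auto intro: assms)
  finally have "(\<Sum>j<Suc m. g j) = g 0" by simp
  then show ?thesis by (simp only: sum.lessThan_Suc)
qed

lemma sum_two_ends:
  fixes g :: "nat \<Rightarrow> real"
  assumes "\<And>j. 0 < j \<Longrightarrow> j < Suc m \<Longrightarrow> g j = 0"
  shows "(\<Sum>j<Suc (Suc m). g j) = g 0 + g (Suc m)"
proof -
  have "(\<Sum>j<Suc m. g j) = g 0 + (\<Sum>j<m. g (Suc j))" by (rule sum.lessThan_Suc_shift)
  also have "(\<Sum>j<m. g (Suc j)) = 0" by (rule sum.neutral) (auto intro: assms)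
  finally have "(\<Sum>j<Suc m. g j) = g 0" by simp
  then show ?thesis by (simp only: sum.lessThan_Suc)
qed

lemma cyc_det:
  fixes G :: "nat \<Rightarrow> nat \<Rightarrow> real" and M :: nat
  defines "N \<equiv> Suc (Suc M)"
  assumes Z: "\<And>i j. i \<le> N \<Longrightarrow> j \<le> N \<Longrightarrow> Suc i < j \<or> Suc j < i \<Longrightarrow> \<not> (i = 0 \<and> j = N) \<Longrightarrow> \<not> (i = N \<and> j = 0) \<Longrightarrow> G i j = 0"
  shows "det (mat (Suc N) (Suc N) (\<lambda>(i,j). G i j)) =
     G N N * contF G N
     - G N (Suc M) * (G (Suc M) N * contF G (Suc M) + G 0 N * (-1)^(Suc M) * (\<Prod>i<Suc M. G (Suc i) i))
     + (-1)^N * G N 0 * (G (Suc M) N * (\<Prod>i<Suc M. G i (Suc i)) + G 0 N * (-1)^(Suc M) * contF (\<lambda>i j. G (Suc i) (Suc j)) (Suc M))"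
proof -
  define A where "A = mat (Suc N) (Suc N) (\<lambda>(i,j). G i j)"
  have Ac: "A \<in> carrier_mat (Suc N) (Suc N)" by (simp add: A_def)
  have "det A = (\<Sum>j<Suc N. A $$ (N,j) * cofactor A N j)"
    by (rule laplace_expansion_row[OF Ac]) simp
  also have "\<dots> = A $$ (N,0) * cofactor A N 0 + A $$ (N, Suc M) * cofactor A N (Suc M) + A $$ (N, N) * cofactor A N N"
    unfolding N_def
  proof (rule sum_three)
    fix j assume j: "0 < j" "j < Suc M"
    then have "G (Suc (Suc M)) j = 0" by (intro Z[unfolded N_def]) auto
    then show "A $$ (Suc (Suc M), j) * cofactor A (Suc (Suc M)) j = 0"
      using j by (simp add: A_def N_def)
  qed
  finally have d0: "det A = A $$ (N,0) * cofactor A N 0 + A $$ (N, Suc M) * cofactor A N (Suc M) + A $$ (N, N) * cofactor A N N" .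
  have d1: "mat_delete A N N = mat N N (\<lambda>(i,j). G i j)"
    by (rule eq_matI) (auto simp: A_def mat_delete_def)
  have d1': "det (mat N N (\<lambda>(i,j). G i j)) = contF G N"
    by (rule tri_det) (auto simp: N_def intro!: Z)
  have d2: "det (mat_delete A N (Suc M)) = G (Suc M) N * contF G (Suc M) + G 0 N * (-1)^(Suc M) * (\<Prod>i<Suc M. G (Suc i) i)"
  proof -
    define C where "C = mat_delete A N (Suc M)"
    have Cc: "C \<in> carrier_mat N N" by (simp add: C_def A_def mat_delete_def)
    have "det C = (\<Sum>i<N. C $$ (i,Suc M) * cofactor C i (Suc M))"
      by (rule laplace_expansion_column[OF Cc]) (simp add: N_def)
    also have "\<dots> = C $$ (0,Suc M) * cofactor C 0 (Suc M) + C $$ (Suc M,Suc M) * cofactor C (Suc M) (Suc M)"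
      unfolding N_def
    proof (rule sum_two_ends)
      fix i assume i: "0 < i" "i < Suc M"
      then have "G i (Suc (Suc M)) = 0" by (intro Z[unfolded N_def]) auto
      then show "C $$ (i, Suc M) * cofactor C i (Suc M) = 0"
        using i by (simp add: C_def A_def N_def mat_delete_def)
    qed
    finally have e0: "det C = C $$ (0,Suc M) * cofactor C 0 (Suc M) + C $$ (Suc M,Suc M) * cofactor C (Suc M) (Suc M)" .
    have e1: "mat_delete C (Suc M) (Suc M) = mat (Suc M) (Suc M) (\<lambda>(i,j). G i j)"
      by (rule eq_matI) (auto simp: C_def A_def N_def mat_delete_def)
    have e2: "det (mat (Suc M) (Suc M) (\<lambda>(i,j). G i j)) = contF G (Suc M)"
      by (rule tri_det) (auto simp: N_def intro!: Z)
    have e3: "mat_delete C 0 (Suc M) = mat (Suc M) (Suc M) (\<lambda>(i,j). G (Suc i) j)"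
      by (rule eq_matI) (auto simp: C_def A_def N_def mat_delete_def)
    have e4: "det (mat (Suc M) (Suc M) (\<lambda>(i,j). G (Suc i) j)) = (\<Prod>i<Suc M. G (Suc i) i)"
    proof -
      have "det (mat (Suc M) (Suc M) (\<lambda>(i,j). G (Suc i) j)) = prod_list (diag_mat (mat (Suc M) (Suc M) (\<lambda>(i,j). G (Suc i) j)))"
        by (rule det_upper_triangular) (auto simp: upper_triangular_def N_def intro!: Z)
      also have "\<dots> = (\<Prod>i<Suc M. G (Suc i) i)"
        by (simp add: diag_mat_def prod_list_upt_conv)
      finally show ?thesis .
    qed
    show ?thesis using e0 unfolding cofactor_def e1 e2 e3 e4
      by (simp add: C_def A_def N_def mat_delete_def)
  qed
  have d3: "det (mat_delete A N 0) = G (Suc M) N * (\<Prod>i<Suc M. G i (Suc i)) + G 0 N * (-1)^(Suc M) * contF (\<lambda>i j. G (Suc i) (Suc j)) (Suc M)"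
  proof -
    define C where "C = mat_delete A N 0"
    have Cc: "C \<in> carrier_mat N N" by (simp add: C_def A_def mat_delete_def)
    have "det C = (\<Sum>i<N. C $$ (i,Suc M) * cofactor C i (Suc M))"
      by (rule laplace_expansion_column[OF Cc]) (simp add: N_def)
    also have "\<dots> = C $$ (0,Suc M) * cofactor C 0 (Suc M) + C $$ (Suc M,Suc M) * cofactor C (Suc M) (Suc M)"
      unfolding N_def
    proof (rule sum_two_ends)
      fix i assume i: "0 < i" "i < Suc M"
      then have "G i (Suc (Suc M)) = 0" by (intro Z[unfolded N_def]) auto
      then show "C $$ (i, Suc M) * cofactor C i (Suc M) = 0"
        using i by (simp add: C_def A_def N_def mat_delete_def)
    qed
    finally have e0: "det C = C $$ (0,Suc M) * cofactor C 0 (Suc M) + C $$ (Suc M,Suc M) * cofactor C (Suc M) (Suc M)" .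
    have e1: "mat_delete C (Suc M) (Suc M) = mat (Suc M) (Suc M) (\<lambda>(i,j). G i (Suc j))"
      by (rule eq_matI) (auto simp: C_def A_def N_def mat_delete_def)
    have e2: "det (mat (Suc M) (Suc M) (\<lambda>(i,j). G i (Suc j))) = (\<Prod>i<Suc M. G i (Suc i))"
    proof -
      have "det (mat (Suc M) (Suc M) (\<lambda>(i,j). G i (Suc j))) = prod_list (diag_mat (mat (Suc M) (Suc M) (\<lambda>(i,j). G i (Suc j))))"
        by (rule det_lower_triangular[where n="Suc M"]) (auto simp: N_def intro!: Z)
      also have "\<dots> = (\<Prod>i<Suc M. G i (Suc i))"
        by (simp add: diag_mat_def prod_list_upt_conv)
      finally show ?thesis .
    qed
    have e3: "mat_delete C 0 (Suc M) = mat (Suc M) (Suc M) (\<lambda>(i,j). G (Suc i) (Suc j))"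
      by (rule eq_matI) (auto simp: C_def A_def N_def mat_delete_def)
    have e4: "det (mat (Suc M) (Suc M) (\<lambda>(i,j). G (Suc i) (Suc j))) = contF (\<lambda>i j. G (Suc i) (Suc j)) (Suc M)"
      by (rule tri_det) (auto simp: N_def intro!: Z)
    show ?thesis using e0 unfolding cofactor_def e1 e2 e3 e4
      by (simp add: C_def A_def N_def mat_delete_def)
  qed
  show ?thesis using d0 unfolding A_def[symmetric] cofactor_def d1 d1' d2 d3
    by (simp add: A_def N_def algebra_simps)
qed



fun cc :: "(nat \<Rightarrow> real) \<Rightarrow> real \<Rightarrow> nat \<Rightarrow> nat \<Rightarrow> real" where
  "cc q x i 0 = 1"
| "cc q x i (Suc 0) = x"
| "cc q x i (Suc (Suc k)) = x * cc q x i (Suc k) - q (i + k) * cc q x i k"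

lemma cc_split_aux:
  "cc q x i (Suc J + Suc L) = cc q x i (Suc J) * cc q x (i + Suc J) (Suc L) - q (i + J) * cc q x i J * cc q x (i + J + 2) L
 \<and> cc q x i (Suc J + Suc (Suc L)) = cc q x i (Suc J) * cc q x (i + Suc J) (Suc (Suc L)) - q (i + J) * cc q x i J * cc q x (i + J + 2) (Suc L)"
proof (induction L)
  case 0
  then show ?case by (simp add: algebra_simps)
next
  case (Suc L)
  let ?k = "Suc (Suc (i + J + L))"
  have h1: "cc q x i (Suc J + Suc (Suc (Suc L))) = x * cc q x i (Suc J + Suc (Suc L)) - q ?k * cc q x i (Suc J + Suc L)"
  proof -
    have e: "Suc J + Suc (Suc (Suc L)) = Suc (Suc (Suc J + Suc L))" by simp
    show ?thesis by (simp only: e cc.simps) (simp add: ac_simps)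
  qed
  have h2: "cc q x (i + Suc J) (Suc (Suc (Suc L))) = x * cc q x (i + Suc J) (Suc (Suc L)) - q ?k * cc q x (i + Suc J) (Suc L)"
    by (simp only: cc.simps) (simp add: ac_simps)
  have h3: "cc q x (i + J + 2) (Suc (Suc L)) = x * cc q x (i + J + 2) (Suc L) - q ?k * cc q x (i + J + 2) L"
    by (simp only: cc.simps) (simp add: ac_simps)
  have alg: "\<And>T3 T2 T1 R3 R2 R1 S2 S1 S0 P c qq::real. T3 = x*T2 - qq*T1 \<Longrightarrow> R3 = x*R2 - qq*R1 \<Longrightarrow> S2 = x*S1 - qq*S0
     \<Longrightarrow> T2 = P*R2 - c*S1 \<Longrightarrow> T1 = P*R1 - c*S0 \<Longrightarrow> T3 = P*R3 - c*S2"
    by simp (simp add: algebra_simps)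
  have "cc q x i (Suc J + Suc (Suc (Suc L))) = cc q x i (Suc J) * cc q x (i + Suc J) (Suc (Suc (Suc L))) - (q (i + J) * cc q x i J) * cc q x (i + J + 2) (Suc (Suc L))"
    by (rule alg[OF h1 h2 h3]) (use Suc.IH in blast)+
  then show ?case using Suc.IH by blast
qed

lemma cc_split:
  "cc q x i (Suc J + Suc L) = cc q x i (Suc J) * cc q x (i + Suc J) (Suc L) - q (i + J) * cc q x i J * cc q x (i + J + 2) L"
  using cc_split_aux by blast

lemma cc_first:
  "cc q x i (Suc (Suc L)) = x * cc q x (Suc i) (Suc L) - q i * cc q x (i + 2) L"
  using cc_split[of q x i 0 L] by simp

lemma cc_neg:
  assumes "x > 0" and "\<And>j. i \<le> j \<Longrightarrow> Suc j < i + k \<Longrightarrow> q j \<le> 0"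
  shows "cc q x i k > 0 \<and> (k \<ge> 1 \<longrightarrow> x * cc q x i (k - 1) \<le> cc q x i k)"
  using assms(2)
proof (induction k rule: less_induct)
  case (less k)
  show ?case
  proof (cases k)
    case 0 then show ?thesis by simp
  next
    case (Suc k1)
    show ?thesis
    proof (cases k1)
      case 0 then show ?thesis using Suc \<open>x > 0\<close> by simp
    next
      case (Suc m)
      have k: "k = Suc (Suc m)" using \<open>k = Suc k1\<close> Suc by simp
      have IH1: "cc q x i (Suc m) > 0" using less.IH[of "Suc m"] less.prems k by auto
      have IH0: "cc q x i m > 0" using less.IH[of m] less.prems k by auto
      have qn: "q (i + m) \<le> 0" using less.prems k by auto
      have "x * cc q x i (Suc m) \<le> cc q x i k"
        using qn IH0 by (simp add: k mult_nonpos_nonneg)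
      moreover have "x * cc q x i (Suc m) > 0" using IH1 \<open>x > 0\<close> by simp
      ultimately show ?thesis by (simp add: k)
    qed
  qed
qed

lemma cc_first_le:
  assumes "x > 0" and "\<And>j. i \<le> j \<Longrightarrow> Suc j < i + Suc k \<Longrightarrow> q j \<le> 0"
  shows "x * cc q x (Suc i) k \<le> cc q x i (Suc k)"
proof (cases k)
  case 0 then show ?thesis by simp
next
  case (Suc L)
  have "cc q x (i+2) L > 0" using cc_neg[OF assms(1), where i="i+2" and k=L and q=q] assms(2) Suc by auto
  moreover have "q i \<le> 0" using assms(2) Suc by auto
  ultimately show ?thesis using cc_first[of q x i L] Suc by (simp add: mult_nonpos_nonneg)
qed

lemma cc_key:
  assumes "x > 0" "s \<ge> 0" and "k \<ge> 1 \<Longrightarrow> q i = - s"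
    and "\<And>j. i \<le> j \<Longrightarrow> Suc j < i + Suc k \<Longrightarrow> q j \<le> 0"
  shows "x * cc q x i (Suc k) \<le> (x^2 + s) * cc q x (Suc i) k"
proof (cases k)
  case 0 then show ?thesis using assms by (simp add: power2_eq_square)
next
  case (Suc L)
  have le: "x * cc q x (i+2) L \<le> cc q x (Suc i) (Suc L)"
    using cc_first_le[OF assms(1), where i="Suc i" and q=q and k=L] assms(4) Suc by (auto simp: numeral_2_eq_2)
  have "x * cc q x i (Suc k) = x * (x * cc q x (Suc i) (Suc L) + s * cc q x (i + 2) L)"
    using cc_first[of q x i L] assms(3) Suc by simp
  also have "\<dots> = x^2 * cc q x (Suc i) (Suc L) + s * (x * cc q x (i + 2) L)"
    by (simp add: algebra_simps power2_eq_square)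
  also have "\<dots> \<le> x^2 * cc q x (Suc i) (Suc L) + s * cc q x (Suc i) (Suc L)"
    using le assms(2) by (intro add_left_mono mult_left_mono) auto
  finally show ?thesis using Suc by (simp add: algebra_simps)
qed

lemma cc_cont: "continuous_on UNIV (\<lambda>x. cc q x i k)"
proof (induction k rule: less_induct)
  case (less k)
  show ?case
  proof (cases k)
    case 0 then show ?thesis by simp
  next
    case (Suc k1)
    show ?thesis
    proof (cases k1)
      case 0 then show ?thesis using Suc by (simp add: continuous_on_id)
    next
      case (Suc m)
      then show ?thesis using \<open>k = Suc k1\<close> less.IH[of m] less.IH[of "Suc m"]
        by (auto intro!: continuous_intros)
    qed
  qed
qed


lemma contF_cc:
  fixes F :: "nat \<Rightarrow> nat \<Rightarrow> real"
  assumes "\<And>i. d \<le> i \<Longrightarrow> i < d + k \<Longrightarrow> F i i = x"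
    and "\<And>i. d \<le> i \<Longrightarrow> Suc i < d + k \<Longrightarrow> F (Suc i) i * F i (Suc i) = q i"
  shows "contF (\<lambda>i j. F (i + d) (j + d)) k = cc q x d k"
  using assms
proof (induction k rule: less_induct)
  case (less k)
  show ?case
  proof (cases k)
    case 0 then show ?thesis by simp
  next
    case (Suc k1)
    show ?thesis
    proof (cases k1)
      case 0 then show ?thesis using Suc less.prems(1)[of d] by simp
    next
      case (Suc m)
      have k: "k = Suc (Suc m)" using \<open>k = Suc k1\<close> Suc by simp
      have I1: "contF (\<lambda>i j. F (i + d) (j + d)) (Suc m) = cc q x d (Suc m)"
        by (rule less.IH) (use less.prems k in auto)
      have I0: "contF (\<lambda>i j. F (i + d) (j + d)) m = cc q x d m"
        by (rule less.IH) (use less.prems k in auto)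
      have "F (Suc m + d) (Suc m + d) = x" using less.prems(1)[of "Suc m + d"] k by simp
      moreover have "F (Suc m + d) (m + d) * F (m + d) (Suc m + d) = q (d + m)"
        using less.prems(2)[of "m + d"] k by (simp add: ac_simps)
      ultimately show ?thesis using I0 I1 k by (simp add: mult.assoc)
    qed
  qed
qed

lemma root_exists:
  fixes \<phi> :: "real \<Rightarrow> real"
  assumes "continuous_on UNIV \<phi>" "\<phi> x0 < 0" "\<phi> X > 0" "x0 < X"
  shows "\<exists>x. x > x0 \<and> \<phi> x = 0"
proof -
  obtain x where x: "x0 \<le> x" "x \<le> X" "\<phi> x = 0"
    using IVT'[of \<phi> x0 0 X] assms continuous_on_subset by fastforce
  then have "x \<noteq> x0" using assms(2) by auto
  then have "x > x0" using x(1) by simp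
  then show ?thesis using x(3) by blast
qed

lemma big_square: assumes h: "(y::real) > 0" "Q > 0" shows "(y + Q + 1)^2 > Q"
proof -
  have "y + Q + 1 \<le> (y + Q + 1) * (y + Q + 1)" using mult_right_mono[of 1 "y+Q+1" "y+Q+1"] h by simp
  then show ?thesis using h unfolding power2_eq_square by linarith
qed

lemma tri_part:
  fixes \<alpha> \<beta> :: int and a :: "int \<Rightarrow> real"
  assumes "\<alpha> \<le> -1" "\<beta> \<ge> 1" "a 0 < 0"
    and pos: "\<And>k. \<alpha> \<le> k \<Longrightarrow> k \<le> max \<beta> 2 \<Longrightarrow> k \<noteq> 0 \<Longrightarrow> a k > 0" and "a 0 + a 2 < 0"
  shows "\<exists>x. x > sqrt (- a 1 * (a 0 + a 2)) \<and> charp (tri_mat \<alpha> \<beta> a) x = 0"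
proof -
  define m' where "m' = nat (- \<alpha> - 1)"
  define r where "r = nat (\<beta> - 1)"
  define m where "m = Suc m'"
  define N where "N = Suc m + Suc r"
  have alpha: "\<alpha> = - int m" using assms(1) by (simp add: m_def m'_def)
  have beta: "\<beta> = int r + 1" using assms(2) by (simp add: r_def)
  have NN: "nat (\<beta> - \<alpha> + 1) = N" by (simp add: N_def alpha beta m_def)
  define q where "q i = - a (\<alpha> + int i) * a (\<alpha> + int i + 1)" for i
  define G where "G x i j = (if i = j then x else 0) - (let jj = \<alpha> + int i; c = \<alpha> + int j in
     if c = jj + 1 then a c else if c = jj - 1 then - a c else 0)" for x :: real and i j
  have charp_eq: "charp (tri_mat \<alpha> \<beta> a) x = cc q x 0 N" for x
  proof -
    have "x \<cdot>\<^sub>m 1\<^sub>m (dim_row (tri_mat \<alpha> \<beta> a)) - tri_mat \<alpha> \<beta> a = mat N N (\<lambda>(i,j). G x i j)"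
      by (rule eq_matI) (auto simp: tri_mat_def NN G_def Let_def)
    then have "charp (tri_mat \<alpha> \<beta> a) x = det (mat N N (\<lambda>(i,j). G x i j))"
      by (simp add: charp_def)
    also have "\<dots> = contF (G x) N"
      by (rule tri_det) (auto simp: G_def Let_def)
    also have "\<dots> = contF (\<lambda>i j. G x (i + 0) (j + 0)) N" by simp
    also have "\<dots> = cc q x 0 N"
      by (rule contF_cc) (auto simp: G_def Let_def q_def algebra_simps)
    finally show ?thesis .
  qed
  have qneg: "q j \<le> 0" if "j \<noteq> m'" "j \<noteq> m" "Suc j < N" for j
  proof -
    have "a (\<alpha> + int j) > 0" using that by (intro pos) (auto simp: alpha beta N_def m_def)
    moreover have "a (\<alpha> + int j + 1) > 0" using that by (intro pos) (auto simp: alpha beta N_def m_def)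
    ultimately show ?thesis by (simp add: q_def)
  qed
  have a1: "a 1 > 0" and a2: "a 2 > 0" and am: "a (-1) > 0" using pos assms(1) by auto
  have qm': "q m' = - a (-1) * a 0" by (simp add: q_def alpha m_def)
  have qm: "q m = - a 0 * a 1" by (simp add: q_def alpha m_def)
  have qm1: "q (Suc m) = - (a 1 * a 2)" by (simp add: q_def alpha m_def)
  define s where "s = a 1 * a 2"
  have s: "s > 0" using a1 a2 by (simp add: s_def)
  define y where "y = - a 1 * (a 0 + a 2)"
  have y: "y > 0" using a1 assms(5) by (simp add: y_def mult_pos_neg)
  define x0 where "x0 = sqrt y"
  have x0: "x0 > 0" "x0^2 = y" using y by (auto simp: x0_def)
  have qm'pos: "q m' > 0" using am assms(3) qm' by (simp add: mult_pos_neg)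
  have qmpos: "q m > 0" using a1 assms(3) qm by (simp add: mult_neg_pos)
  have dec: "cc q x 0 N = (x * cc q x 0 m - q m' * cc q x 0 m') * cc q x (Suc m) (Suc r) - q m * cc q x 0 m * cc q x (m + 2) r" for x
  proof -
    have "cc q x 0 N = cc q x 0 (Suc m) * cc q x (0 + Suc m) (Suc r) - q (0 + m) * cc q x 0 m * cc q x (0 + m + 2) r"
      unfolding N_def by (rule cc_split)
    moreover have "cc q x 0 (Suc m) = x * cc q x 0 m - q m' * cc q x 0 m'" by (simp add: m_def)
    ultimately show ?thesis by simp
  qed
  have Lpos: "cc q x 0 m > 0 \<and> x * cc q x 0 m' \<le> cc q x 0 m" if "x > 0" for x
    using cc_neg[OF that, where i=0 and k=m and q=q] qneg by (auto simp: m_def N_def)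
  have L'pos: "cc q x 0 m' > 0" if "x > 0" for x
    using cc_neg[OF that, where i=0 and k=m' and q=q] qneg by (auto simp: m_def N_def)
  have Rpos: "cc q x (Suc m) (Suc r) > 0" if "x > 0" for x
    using cc_neg[OF that, where i="Suc m" and k="Suc r" and q=q] qneg by (auto simp: m_def N_def)
  have R'pos: "cc q x (m+2) r > 0" if "x > 0" for x
    using cc_neg[OF that, where i="m+2" and k="r" and q=q] qneg by (auto simp: m_def N_def)
  have Rle: "x * cc q x (m+2) r \<le> cc q x (Suc m) (Suc r)" if "x > 0" for x
    using cc_first_le[OF that, where i="Suc m" and k="r" and q=q] qneg by (auto simp: m_def N_def)
  have key: "x * cc q x (Suc m) (Suc r) \<le> (x^2 + s) * cc q x (m+2) r" if "x > 0" for x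
    using cc_key[OF that s[THEN less_imp_le], where i="Suc m" and k=r and q=q] qneg qm1
    by (auto simp: m_def N_def s_def)
  have neg: "cc q x0 0 N < 0"
  proof -
    have "x0^2 + s = q m" using x0(2) by (simp add: y_def s_def qm algebra_simps)
    then have k2: "x0 * cc q x0 (Suc m) (Suc r) - q m * cc q x0 (m+2) r \<le> 0" using key[OF x0(1)] by simp
    have "cc q x0 0 N = cc q x0 0 m * (x0 * cc q x0 (Suc m) (Suc r) - q m * cc q x0 (m+2) r) - q m' * cc q x0 0 m' * cc q x0 (Suc m) (Suc r)"
      by (simp add: dec algebra_simps)
    moreover have "cc q x0 0 m * (x0 * cc q x0 (Suc m) (Suc r) - q m * cc q x0 (m+2) r) \<le> 0"
      using Lpos[OF x0(1)] k2 by (simp add: mult_nonneg_nonpos)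
    moreover have "q m' * cc q x0 0 m' * cc q x0 (Suc m) (Suc r) > 0"
      using qm'pos L'pos[OF x0(1)] Rpos[OF x0(1)] by simp
    ultimately show ?thesis by linarith
  qed
  define Q where "Q = q m' + q m"
  have Q: "Q > 0" using qm'pos qmpos by (simp add: Q_def)
  define X where "X = x0 + Q + 1"
  have X: "X > x0" "X > 0" "X^2 > Q" using x0 Q big_square[OF x0(1) Q] by (auto simp: X_def)
  have pos': "cc q X 0 N > 0"
  proof -
    let ?L = "cc q X 0 m" and ?L' = "cc q X 0 m'" and ?R = "cc q X (Suc m) (Suc r)" and ?R' = "cc q X (m+2) r"
    have h1: "X * ?L' \<le> ?L" "?L > 0" using Lpos[OF X(2)] by auto
    have h2: "X * ?R' \<le> ?R" "?R > 0" using Rle[OF X(2)] Rpos[OF X(2)] by auto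
    have "X * cc q X 0 N = X^2 * ?L * ?R - q m' * (X * ?L') * ?R - q m * ?L * (X * ?R')"
      by (simp add: dec algebra_simps power2_eq_square)
    also have "\<dots> \<ge> X^2 * ?L * ?R - q m' * ?L * ?R - q m * ?L * ?R"
    proof -
      have "q m' * (X * ?L') * ?R \<le> q m' * ?L * ?R"
        using h1 h2 qm'pos by (intro mult_right_mono mult_left_mono) auto
      moreover have "q m * ?L * (X * ?R') \<le> q m * ?L * ?R"
        using h1 h2 qmpos by (intro mult_left_mono) auto
      ultimately show ?thesis by linarith
    qed
    finally have "X * cc q X 0 N \<ge> (X^2 - Q) * (?L * ?R)" by (simp add: Q_def algebra_simps)
    moreover have "(X^2 - Q) * (?L * ?R) > 0" using X(3) h1 h2 by simp
    ultimately have "X * cc q X 0 N > 0" by linarith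
    then show ?thesis using X(2) by (simp add: zero_less_mult_iff)
  qed
  have "\<exists>x. x > x0 \<and> cc q x 0 N = 0"
    by (rule root_exists[OF cc_cont neg pos' X(1)])
  then show ?thesis using charp_eq by (auto simp: x0_def y_def)
qed


lemma cyc_part:
  fixes n :: nat and a :: "nat \<Rightarrow> real"
  assumes n3: "n \<ge> 3" and odd: "odd n" and a0: "a 0 < 0" and pos: "\<forall>k\<in>{1..<n}. a k > 0" and a02: "a 0 + a 2 < 0"
  shows "\<exists>x. x > sqrt (- a 1 * (a 0 + a 2)) \<and> charp (cyc_mat n a) x = 0"
proof -
  obtain M where n: "n = Suc (Suc (Suc M))"
  proof
    show "n = Suc (Suc (Suc (n - 3)))" using n3 by simp
  qed
  define N where "N = Suc (Suc M)"
  have nN: "n = Suc N" by (simp add: n N_def)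
  have evN: "(-1::real) ^ N = 1" using odd by (simp add: nN)
  have odM: "(-1::real) ^ Suc M = -1" using odd by (simp add: n)
  have evM: "(-1::real) ^ M = 1" using odd by (simp add: n)
  have modsuc: "(i + 1) mod n = (if i = N then 0 else i + 1)" if "i \<le> N" for i
    using that by (auto simp: nN)
  define G where "G x i j = (if i = j then x else 0) - (if j = (i + 1) mod n then a j else if (j + 1) mod n = i then - a j else 0)"
    for x :: real and i j
  define q where "q i = - a i * a (Suc i)" for i
  have posk: "a k > 0" if "1 \<le> k" "k \<le> N" for k using pos that by (auto simp: nN)
  have gd: "G x i i = x" if "i \<le> N" for x i using that modsuc[OF that] by (auto simp: G_def N_def)
  have gsub: "G x (Suc i) i = a i" if "i < N" for x i
    using that modsuc[of i] modsuc[of "Suc i"] by (simp add: G_def N_def)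
  have gsup: "G x i (Suc i) = - a (Suc i)" if "i < N" for x i
    using that modsuc[of i] by (simp add: G_def)
  have g0N: "G x 0 N = a N" for x using modsuc[of 0] modsuc[of N] by (simp add: G_def N_def)
  have gN0: "G x N 0 = - a 0" for x using modsuc[of N] by (simp add: G_def N_def)
  have Z: "G x i j = 0" if "i \<le> N" "j \<le> N" "Suc i < j \<or> Suc j < i" "\<not> (i = 0 \<and> j = N)" "\<not> (i = N \<and> j = 0)" for x i j
    using that modsuc[of i] modsuc[of j] by (auto simp: G_def)
  have charp_eq: "charp (cyc_mat n a) x = cc q x 0 (Suc N) - (- a 0 * a N) * cc q x 1 (Suc M)" for x
  proof -
    have "x \<cdot>\<^sub>m 1\<^sub>m (dim_row (cyc_mat n a)) - cyc_mat n a = mat (Suc N) (Suc N) (\<lambda>(i,j). G x i j)"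
      by (rule eq_matI) (auto simp: cyc_mat_def nN G_def)
    then have "charp (cyc_mat n a) x = det (mat (Suc N) (Suc N) (\<lambda>(i,j). G x i j))"
      by (simp add: charp_def)
    also have "\<dots> = G x N N * contF (G x) N
     - G x N (Suc M) * (G x (Suc M) N * contF (G x) (Suc M) + G x 0 N * (-1)^(Suc M) * (\<Prod>i<Suc M. G x (Suc i) i))
     + (-1)^N * G x N 0 * (G x (Suc M) N * (\<Prod>i<Suc M. G x i (Suc i)) + G x 0 N * (-1)^(Suc M) * contF (\<lambda>i j. G x (Suc i) (Suc j)) (Suc M))"
      unfolding N_def by (rule cyc_det) (use Z in \<open>auto simp: N_def\<close>)
    also have "contF (G x) N = cc q x 0 N"
      using contF_cc[where F="G x" and d=0 and k=N and x=x and q=q] gd gsub gsup by (simp add: q_def)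
    also have "contF (G x) (Suc M) = cc q x 0 (Suc M)"
      using contF_cc[where F="G x" and d=0 and k="Suc M" and x=x and q=q] gd gsub gsup by (simp add: q_def N_def)
    also have "contF (\<lambda>i j. G x (Suc i) (Suc j)) (Suc M) = cc q x 1 (Suc M)"
      using contF_cc[where F="G x" and d=1 and k="Suc M" and x=x and q=q] gd gsub gsup by (simp add: q_def N_def)
    also have "(\<Prod>i<Suc M. G x (Suc i) i) = (\<Prod>i<Suc M. a i)"
      by (rule prod.cong) (auto simp: gsub N_def)
    also have "(\<Prod>i<Suc M. G x i (Suc i)) = (\<Prod>i<Suc M. - a (Suc i))"
      by (rule prod.cong) (auto simp: gsup N_def)
    also have "(\<Prod>i<Suc M. - a (Suc i)) = - (\<Prod>i<Suc M. a (Suc i))"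
    proof -
      have "(-1::real) ^ M = 1" using odd by (simp add: n)
      then show ?thesis by (simp add: prod_uminus)
    qed
    also have "G x N N = x" by (simp add: gd)
    also have "G x N (Suc M) = a (Suc M)" using gsub[of "Suc M" x] by (simp add: N_def)
    also have "G x (Suc M) N = - a N" using gsup[of "Suc M" x] by (simp add: N_def)
    finally have e: "charp (cyc_mat n a) x = x * cc q x 0 N - a (Suc M) * (- a N * cc q x 0 (Suc M) + a N * (-1) * (\<Prod>i<Suc M. a i))
      + (- a 0) * (- a N * - (\<Prod>i<Suc M. a (Suc i)) + a N * (-1) * cc q x 1 (Suc M))"
      by (simp add: evN odM evM g0N gN0)
    have cyc: "a (Suc M) * (\<Prod>i<Suc M. a i) = a 0 * (\<Prod>i<Suc M. a (Suc i))"
    proof -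
      have "a (Suc M) * (\<Prod>i<Suc M. a i) = (\<Prod>i<Suc (Suc M). a i)" by (simp add: prod.lessThan_Suc)
      also have "\<dots> = a 0 * (\<Prod>i<Suc M. a (Suc i))" by (rule prod.lessThan_Suc_shift)
      finally show ?thesis .
    qed
    have qSM: "q (Suc M) = - (a (Suc M) * a N)" by (simp add: q_def N_def)
    have cS0: "cc q x 0 (Suc N) = x * cc q x 0 N - q (Suc M) * cc q x 0 (Suc M)" by (simp add: N_def)
    have cS: "cc q x 0 (Suc N) = x * cc q x 0 N + a (Suc M) * a N * cc q x 0 (Suc M)"
      using cS0 unfolding qSM by simp
    have alg2: "\<And>C K A B L P1 Z P2 L1 :: real. C = x*K - A*(-B*L + B*(-1)*P1) + (-Z)*(-B*(-P2) + B*(-1)*L1)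
       \<Longrightarrow> A*P1 = Z*P2 \<Longrightarrow> C = x*K + A*B*L + Z*B*L1"
    proof -
      fix C K A B L P1 Z P2 L1 :: real
      assume h1: "C = x*K - A*(-B*L + B*(-1)*P1) + (-Z)*(-B*(-P2) + B*(-1)*L1)" and h2: "A*P1 = Z*P2"
      have "C = x*K + A*B*L + Z*B*L1 + B*(A*P1 - Z*P2)" using h1 by (simp add: algebra_simps)
      then show "C = x*K + A*B*L + Z*B*L1" using h2 by simp
    qed
    have "charp (cyc_mat n a) x = x * cc q x 0 N + a (Suc M) * a N * cc q x 0 (Suc M) + a 0 * a N * cc q x 1 (Suc M)"
      by (rule alg2[OF e cyc])
    then show ?thesis using cS by simp
  qed
  define p where "p = - a 0 * a N"
  have a1: "a 1 > 0" and a2: "a 2 > 0" and aN: "a N > 0" using posk by (auto simp: N_def)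
  have ppos: "p > 0" using a0 aN by (simp add: p_def mult_neg_pos)
  have q0: "q 0 = - a 0 * a 1" by (simp add: q_def)
  have q0pos: "q 0 > 0" using a0 a1 q0 by (simp add: mult_neg_pos)
  have q1: "q 1 = - (a 1 * a 2)" by (simp add: q_def numeral_2_eq_2)
  define s where "s = a 1 * a 2"
  have s: "s > 0" using a1 a2 by (simp add: s_def)
  have qneg: "q j \<le> 0" if "1 \<le> j" "j < N" for j
    using posk[of j] posk[of "Suc j"] that by (simp add: q_def)
  define y where "y = - a 1 * (a 0 + a 2)"
  have y: "y > 0" using a1 a02 by (simp add: y_def mult_pos_neg)
  define x0 where "x0 = sqrt y"
  have x0: "x0 > 0" "x0^2 = y" using y by (auto simp: x0_def)
  have dec: "cc q x 0 (Suc N) = x * cc q x 1 N - q 0 * cc q x 2 (Suc M)" for x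
    using cc_first[of q x 0 "Suc M"] unfolding N_def by (simp only: add_0_left One_nat_def)
  have Kpos: "cc q x 1 N > 0 \<and> x * cc q x 1 (Suc M) \<le> cc q x 1 N" if "x > 0" for x
    using cc_neg[OF that, where i=1 and k=N and q=q] qneg by (auto simp: N_def)
  have K1pos: "cc q x 2 (Suc M) > 0" if "x > 0" for x
    using cc_neg[OF that, where i=2 and k="Suc M" and q=q] qneg by (auto simp: N_def)
  have K2pos: "cc q x 1 (Suc M) > 0" if "x > 0" for x
    using cc_neg[OF that, where i=1 and k="Suc M" and q=q] qneg by (auto simp: N_def)
  have K1le: "x * cc q x 2 (Suc M) \<le> cc q x 1 N" if "x > 0" for x
    using cc_first_le[OF that, where i=1 and k="Suc M" and q=q] qneg by (auto simp: N_def numeral_2_eq_2)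
  have key: "x * cc q x 1 N \<le> (x^2 + s) * cc q x 2 (Suc M)" if "x > 0" for x
    using cc_key[OF that s[THEN less_imp_le], where i=1 and k="Suc M" and q=q] qneg q1
    by (auto simp: N_def s_def numeral_2_eq_2)
  define \<phi> where "\<phi> x = cc q x 0 (Suc N) - p * cc q x 1 (Suc M)" for x
  have neg: "\<phi> x0 < 0"
  proof -
    have "x0^2 + s = q 0" using x0(2) by (simp add: y_def s_def q0 algebra_simps)
    then have "x0 * cc q x0 1 N - q 0 * cc q x0 2 (Suc M) \<le> 0" using key[OF x0(1)] by simp
    moreover have "p * cc q x0 1 (Suc M) > 0" using ppos K2pos[OF x0(1)] by simp
    ultimately show ?thesis by (simp add: \<phi>_def dec)
  qed
  define Q where "Q = q 0 + p"
  have Q: "Q > 0" using q0pos ppos by (simp add: Q_def)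
  define X where "X = x0 + Q + 1"
  have X: "X > x0" "X > 0" "X^2 > Q" using x0 Q big_square[OF x0(1) Q] by (auto simp: X_def)
  have pos': "\<phi> X > 0"
  proof -
    let ?K = "cc q X 1 N" and ?K1 = "cc q X 2 (Suc M)" and ?K2 = "cc q X 1 (Suc M)"
    have h: "?K > 0" "X * ?K2 \<le> ?K" "X * ?K1 \<le> ?K" using Kpos[OF X(2)] K1le[OF X(2)] by auto
    have "X * \<phi> X = X^2 * ?K - q 0 * (X * ?K1) - p * (X * ?K2)"
      by (simp add: \<phi>_def dec algebra_simps power2_eq_square)
    also have "\<dots> \<ge> X^2 * ?K - q 0 * ?K - p * ?K"
    proof -
      have "q 0 * (X * ?K1) \<le> q 0 * ?K" using h q0pos by (intro mult_left_mono) auto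
      moreover have "p * (X * ?K2) \<le> p * ?K" using h ppos by (intro mult_left_mono) auto
      ultimately show ?thesis by linarith
    qed
    finally have "X * \<phi> X \<ge> (X^2 - Q) * ?K" by (simp add: Q_def algebra_simps)
    moreover have "(X^2 - Q) * ?K > 0" using X(3) h by simp
    ultimately have "X * \<phi> X > 0" by linarith
    then show ?thesis using X(2) by (simp add: zero_less_mult_iff)
  qed
  have cont: "continuous_on UNIV \<phi>"
    unfolding \<phi>_def by (intro continuous_intros cc_cont)
  have "\<exists>x. x > x0 \<and> \<phi> x = 0"
    by (rule root_exists[OF cont neg pos' X(1)])
  then show ?thesis using charp_eq by (auto simp: x0_def y_def \<phi>_def p_def)
qed

theorem lemma4:
  shows "(\<forall>(n::nat) (a::nat \<Rightarrow> real).
            n \<ge> 3 \<and> odd n \<and> a 0 < 0 \<and> (\<forall>k\<in>{1..<n}. a k > 0) \<and> a 0 + a 2 < 0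
            \<longrightarrow> (\<exists>x. x > sqrt (- a 1 * (a 0 + a 2)) \<and> charp (cyc_mat n a) x = 0))
       \<and> (\<forall>(\<alpha>::int) (\<beta>::int) (a::int \<Rightarrow> real).
            \<alpha> \<le> -1 \<and> \<beta> \<ge> 1 \<and> a 0 < 0
            \<and> (\<forall>k. \<alpha> \<le> k \<and> k \<le> max \<beta> 2 \<and> k \<noteq> 0 \<longrightarrow> a k > 0) \<and> a 0 + a 2 < 0
            \<longrightarrow> (\<exists>x. x > sqrt (- a 1 * (a 0 + a 2)) \<and> charp (tri_mat \<alpha> \<beta> a) x = 0))"
proof (intro conjI allI impI)
  fix n :: nat and a :: "nat \<Rightarrow> real"
  assume h: "n \<ge> 3 \<and> odd n \<and> a 0 < 0 \<and> (\<forall>k\<in>{1..<n}. a k > 0) \<and> a 0 + a 2 < 0"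
  show "\<exists>x. x > sqrt (- a 1 * (a 0 + a 2)) \<and> charp (cyc_mat n a) x = 0"
    using h by (intro cyc_part) auto
next
  fix \<alpha> \<beta> :: int and a :: "int \<Rightarrow> real"
  assume h: "\<alpha> \<le> -1 \<and> \<beta> \<ge> 1 \<and> a 0 < 0
            \<and> (\<forall>k. \<alpha> \<le> k \<and> k \<le> max \<beta> 2 \<and> k \<noteq> 0 \<longrightarrow> a k > 0) \<and> a 0 + a 2 < 0"
  show "\<exists>x. x > sqrt (- a 1 * (a 0 + a 2)) \<and> charp (tri_mat \<alpha> \<beta> a) x = 0"
    using h by (intro tri_part) auto
qed

end
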